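(* Let $G$ be a finite group. Then the power graph $\mathscr{G}(G)$ is Class 2 if and only if $G$ is cyclic of order $p^a$ for some odd prime $p$ and integer $a\geq 1$.
   Context: For a finite group $G$, the power graph $\mathscr{G}(G)$ is the simple graph with vertex set the elements of $G$, in which two distinct elements $a,b$ are adjacent if and only if one is a power of the other. For a finite simple graph $\Gamma$, $\chi'(\Gamma)$ denotes its edge-chromatic number (the least number of colors in a proper edge coloring) and $\Delta(\Gamma)$ its maximum vertex degree. By Vizing's theorem $\Delta(\Gamma)\le\chi'(\Gamma)\le\Delta(\Gamma)+1$; $\Gamma$ is Class 1 if $\chi'(\Gamma)=\Delta(\Gamma)$ and Class 2 if $\chi'(\Gamma)=\Delta(\Gamma)+1$. *)

theory Defs
  imports "HOL-Algebra.Elementary_Groups" "HOL-Computational_Algebra.Primes"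
begin

text \<open>Simple graphs given by a vertex set V and an adjacency relation E
  (intended symmetric and irreflexive on V).\<close>

definition graph_edges :: "'a set \<Rightarrow> ('a \<Rightarrow> 'a \<Rightarrow> bool) \<Rightarrow> 'a set set" where
  "graph_edges V E = {{u, v} | u v. u \<in> V \<and> v \<in> V \<and> E u v}"

definition vertex_degree :: "'a set \<Rightarrow> ('a \<Rightarrow> 'a \<Rightarrow> bool) \<Rightarrow> 'a \<Rightarrow> nat" where
  "vertex_degree V E v = card {u \<in> V. E v u}"

definition max_degree :: "'a set \<Rightarrow> ('a \<Rightarrow> 'a \<Rightarrow> bool) \<Rightarrow> nat" where
  "max_degree V E = Max (vertex_degree V E ` V)"

definition proper_edge_colouring ::
  "'a set \<Rightarrow> ('a \<Rightarrow> 'a \<Rightarrow> bool) \<Rightarrow> nat \<Rightarrow> ('a set \<Rightarrow> nat) \<Rightarrow> bool" where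
  "proper_edge_colouring V E k c \<longleftrightarrow>
     (\<forall>e \<in> graph_edges V E. c e < k) \<and>
     (\<forall>e1 \<in> graph_edges V E. \<forall>e2 \<in> graph_edges V E.
        e1 \<noteq> e2 \<and> e1 \<inter> e2 \<noteq> {} \<longrightarrow> c e1 \<noteq> c e2)"

definition edge_chromatic_number :: "'a set \<Rightarrow> ('a \<Rightarrow> 'a \<Rightarrow> bool) \<Rightarrow> nat" where
  "edge_chromatic_number V E = (LEAST k. \<exists>c. proper_edge_colouring V E k c)"

definition is_class2 :: "'a set \<Rightarrow> ('a \<Rightarrow> 'a \<Rightarrow> bool) \<Rightarrow> bool" where
  "is_class2 V E \<longleftrightarrow> edge_chromatic_number V E = max_degree V E + 1"

definition power_adj :: "('a, 'b) monoid_scheme \<Rightarrow> 'a \<Rightarrow> 'a \<Rightarrow> bool" where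
  "power_adj G a b \<longleftrightarrow> a \<noteq> b \<and>
     ((\<exists>n::int. b = a [^]\<^bsub>G\<^esub> n) \<or> (\<exists>n::int. a = b [^]\<^bsub>G\<^esub> n))"

end

theory Submission
  imports Defs "HOL-Algebra.Multiplicative_Group"
begin

definition pick_col :: "('a \<Rightarrow> 'a \<Rightarrow> nat) \<Rightarrow> 'a set \<Rightarrow> nat" where
  "pick_col f e = (let a = (SOME x. x \<in> e) in f a (SOME y. y \<in> e \<and> y \<noteq> a))"

lemma pick_col_pair:
  assumes "u \<noteq> v" and fsym: "\<And>x y. f x y = f y x"
  shows "pick_col f {u, v} = f u v"
proof -
  define a where "a = (SOME x. x \<in> {u, v})"
  have a: "a \<in> {u, v}" unfolding a_def by (rule someI[of _ u]) simp
  define b where "b = (SOME y. y \<in> {u, v} \<and> y \<noteq> a)"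
  have "\<exists>y. y \<in> {u, v} \<and> y \<noteq> a" using a assms(1) by auto
  then have b: "b \<in> {u, v} \<and> b \<noteq> a" unfolding b_def by (rule someI_ex)
  have "pick_col f {u, v} = f a b" unfolding pick_col_def a_def b_def Let_def by simp
  also have "\<dots> = f u v" using a b fsym by auto
  finally show ?thesis .
qed

lemma graph_edges_elem:
  assumes "e \<in> graph_edges V E"
  obtains u v where "e = {u, v}" "u \<in> V" "v \<in> V" "E u v"
  using assms unfolding graph_edges_def by blast

lemma colouring_from_fun:
  assumes sym: "\<And>x y. x \<in> V \<Longrightarrow> y \<in> V \<Longrightarrow> E x y \<Longrightarrow> E y x"
    and irr: "\<And>x. x \<in> V \<Longrightarrow> \<not> E x x"
    and fsym: "\<And>x y. f x y = f y x"
    and flt: "\<And>u v. u \<in> V \<Longrightarrow> v \<in> V \<Longrightarrow> E u v \<Longrightarrow> f u v < K"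
    and finj: "\<And>w y1 y2. w \<in> V \<Longrightarrow> y1 \<in> V \<Longrightarrow> y2 \<in> V \<Longrightarrow> E w y1 \<Longrightarrow> E w y2
                  \<Longrightarrow> y1 \<noteq> y2 \<Longrightarrow> f w y1 \<noteq> f w y2"
  shows "proper_edge_colouring V E K (pick_col f)"
proof -
  have pc: "\<And>u v. u \<noteq> v \<Longrightarrow> pick_col f {u, v} = f u v"
    by (rule pick_col_pair) (auto intro: fsym)
  show ?thesis
  unfolding proper_edge_colouring_def
proof (intro conjI ballI impI)
  fix e assume "e \<in> graph_edges V E"
  then obtain u v where e: "e = {u, v}" "u \<in> V" "v \<in> V" "E u v" by (rule graph_edges_elem)
  have "u \<noteq> v" using e irr by auto
  then show "pick_col f e < K" using e flt pc by simp
next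
  fix e1 e2 assume e1: "e1 \<in> graph_edges V E" and e2: "e2 \<in> graph_edges V E"
    and ne: "e1 \<noteq> e2 \<and> e1 \<inter> e2 \<noteq> {}"
  obtain u1 v1 where a: "e1 = {u1, v1}" "u1 \<in> V" "v1 \<in> V" "E u1 v1" using e1 by (rule graph_edges_elem)
  obtain u2 v2 where b: "e2 = {u2, v2}" "u2 \<in> V" "v2 \<in> V" "E u2 v2" using e2 by (rule graph_edges_elem)
  from ne obtain w where w: "w \<in> e1" "w \<in> e2" by blast
  have "\<exists>y1. e1 = {w, y1} \<and> y1 \<in> V \<and> E w y1"
    using a w sym by auto
  then obtain y1 where y1: "e1 = {w, y1}" "y1 \<in> V" "E w y1" by blast
  have "\<exists>y2. e2 = {w, y2} \<and> y2 \<in> V \<and> E w y2"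
    using b w sym by auto
  then obtain y2 where y2: "e2 = {w, y2}" "y2 \<in> V" "E w y2" by blast
  have wV: "w \<in> V" using a w by auto
  have "w \<noteq> y1" using y1 irr wV by auto
  moreover have "w \<noteq> y2" using y2 irr wV by auto
  moreover have "y1 \<noteq> y2" using ne y1 y2 by auto
  ultimately show "pick_col f e1 \<noteq> pick_col f e2"
    using y1 y2 finj[OF wV y1(2) y2(2) y1(3) y2(3)] pc by simp
qed
qed
lemma dvd_small_int:
  fixes d x :: int
  assumes "d dvd x" "\<bar>x\<bar> < d"
  shows "x = 0"
proof (rule ccontr)
  assume "x \<noteq> 0"
  hence "\<bar>d\<bar> \<le> \<bar>x\<bar>" using assms(1) by (rule dvd_imp_le_int)
  thus False using assms(2) by linarith
qed

lemma mod_add_cancel_lt: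
  fixes a b c N :: nat
  assumes "(a + b) mod N = (a + c) mod N" "b < N" "c < N"
  shows "b = c"
proof -
  have "int ((a + b) mod N) = int ((a + c) mod N)" using assms(1) by simp
  hence "(int a + int b) mod int N = (int a + int c) mod int N" by (simp add: zmod_int)
  hence "int N dvd (int a + int b) - (int a + int c)" by (simp only: mod_eq_dvd_iff)
  hence "int N dvd int b - int c" by simp
  moreover have "\<bar>int b - int c\<bar> < int N" using assms(2,3) by simp
  ultimately have "int b - int c = 0" by (rule dvd_small_int)
  thus ?thesis by simp
qed

lemma labelled_colouring:
  assumes lab: "inj_on lab V"
    and sym: "\<And>x y. x \<in> V \<Longrightarrow> y \<in> V \<Longrightarrow> E x y \<Longrightarrow> E y x"
    and irr: "\<And>x. x \<in> V \<Longrightarrow> \<not> E x x"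
    and csym: "\<And>p q. col p q = col q p"
    and clt: "\<And>u v. u \<in> V \<Longrightarrow> v \<in> V \<Longrightarrow> E u v \<Longrightarrow> col (lab u) (lab v) < K"
    and cinj: "\<And>w y1 y2. w \<in> V \<Longrightarrow> y1 \<in> V \<Longrightarrow> y2 \<in> V \<Longrightarrow> E w y1 \<Longrightarrow> E w y2
                  \<Longrightarrow> lab y1 \<noteq> lab y2 \<Longrightarrow> lab w \<noteq> lab y1 \<Longrightarrow> lab w \<noteq> lab y2
                  \<Longrightarrow> col (lab w) (lab y1) \<noteq> col (lab w) (lab y2)"
  shows "\<exists>c. proper_edge_colouring V E K c"
proof -
  have "proper_edge_colouring V E K (pick_col (\<lambda>u v. col (lab u) (lab v)))"
  proof (rule colouring_from_fun[OF sym irr])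
    show "\<And>x y. col (lab x) (lab y) = col (lab y) (lab x)" by (rule csym)
    show "\<And>u v. u \<in> V \<Longrightarrow> v \<in> V \<Longrightarrow> E u v \<Longrightarrow> col (lab u) (lab v) < K" by (rule clt)
    fix w y1 y2 assume h: "w \<in> V" "y1 \<in> V" "y2 \<in> V" "E w y1" "E w y2" "y1 \<noteq> y2"
    have "w \<noteq> y1" "w \<noteq> y2" using h irr by auto
    hence "lab y1 \<noteq> lab y2" "lab w \<noteq> lab y1" "lab w \<noteq> lab y2"
      using h lab unfolding inj_on_def by blast+
    thus "col (lab w) (lab y1) \<noteq> col (lab w) (lab y2)" using cinj h by blast
  qed (auto)
  thus ?thesis by blast
qed

lemma sum_colouring:
  assumes fin: "finite V"
    and sym: "\<And>x y. x \<in> V \<Longrightarrow> y \<in> V \<Longrightarrow> E x y \<Longrightarrow> E y x"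
    and irr: "\<And>x. x \<in> V \<Longrightarrow> \<not> E x x"
  shows "\<exists>c. proper_edge_colouring V E (card V) c"
proof -
  obtain lab where lab: "bij_betw lab V {0..<card V}" using ex_bij_betw_finite_nat[OF fin] by blast
  have lt: "\<And>x. x \<in> V \<Longrightarrow> lab x < card V" using lab unfolding bij_betw_def by auto
  show ?thesis
  proof (rule labelled_colouring[where col = "\<lambda>p q. (p + q) mod card V" and lab = lab])
    show "inj_on lab V" using lab bij_betw_def by blast
    fix u v assume "u \<in> V" "v \<in> V" "E u v"
    hence "card V > 0" using fin card_gt_0_iff by blast
    thus "(lab u + lab v) mod card V < card V" by simp
  next
    fix w y1 y2 assume h: "w \<in> V" "y1 \<in> V" "y2 \<in> V" "lab y1 \<noteq> lab y2"
    show "(lab w + lab y1) mod card V \<noteq> (lab w + lab y2) mod card V"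
      using mod_add_cancel_lt[of "lab w" "lab y1" "card V" "lab y2"] h lt by blast
  qed (auto simp: sym irr add.commute)
qed

lemma double_mod_inj:
  fixes x y m :: nat
  assumes "odd m" "(2 * x) mod m = (2 * y) mod m" "x < m" "y < m"
  shows "x = y"
proof -
  have "int ((2 * x) mod m) = int ((2 * y) mod m)" using assms(2) by simp
  hence "(2 * int x) mod int m = (2 * int y) mod int m" by (simp add: zmod_int)
  hence "int m dvd 2 * int x - 2 * int y" by (simp only: mod_eq_dvd_iff)
  hence "int m dvd 2 * (int x - int y)" by (simp add: right_diff_distrib)
  moreover have "coprime (int m) 2" using assms(1) by simp
  ultimately have d: "int m dvd (int x - int y)" using coprime_dvd_mult_right_iff by blast
  have "\<bar>int x - int y\<bar> < int m" using assms(3,4) by simp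
  hence "int x - int y = 0" using d dvd_small_int by blast
  thus ?thesis by simp
qed

lemma even_colouring:
  assumes fin: "finite V" and ev: "even (card V)" and pos: "card V \<ge> 2"
    and sym: "\<And>x y. x \<in> V \<Longrightarrow> y \<in> V \<Longrightarrow> E x y \<Longrightarrow> E y x"
    and irr: "\<And>x. x \<in> V \<Longrightarrow> \<not> E x x"
  shows "\<exists>c. proper_edge_colouring V E (card V - 1) c"
proof -
  define m where "m = card V - 1"
  have oddm: "odd m" using ev pos unfolding m_def by presburger  
  have m1: "m \<ge> 1" using pos unfolding m_def by simp
  obtain lab where lab: "bij_betw lab V {0..<card V}" using ex_bij_betw_finite_nat[OF fin] by blast
  have lt: "\<And>x. x \<in> V \<Longrightarrow> lab x \<le> m"
  proof -
    fix x assume "x \<in> V"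
    hence "lab x < card V" using lab unfolding bij_betw_def by auto
    thus "lab x \<le> m" unfolding m_def by simp
  qed
  define col where "col = (\<lambda>p q. if p = m then (2 * q) mod m else if q = m then (2 * p) mod m
                        else (p + q) mod m)"
  show ?thesis unfolding m_def[symmetric]
  proof (rule labelled_colouring[where col = col and lab = lab])
    show "inj_on lab V" using lab bij_betw_def by blast
    show "\<And>p q. col p q = col q p" unfolding col_def by (auto simp: add.commute)
    fix u v assume "u \<in> V" "v \<in> V" "E u v"
    thus "col (lab u) (lab v) < m" using m1 unfolding col_def by auto
  next
    fix w y1 y2 assume h: "w \<in> V" "y1 \<in> V" "y2 \<in> V" "lab y1 \<noteq> lab y2"
      "lab w \<noteq> lab y1" "lab w \<noteq> lab y2"
    have a: "lab w \<le> m" "lab y1 \<le> m" "lab y2 \<le> m" using lt h by auto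
    show "col (lab w) (lab y1) \<noteq> col (lab w) (lab y2)"
    proof
      assume eq: "col (lab w) (lab y1) = col (lab w) (lab y2)"
      show False
      proof (cases "lab w = m")
        case True
        hence "(2 * lab y1) mod m = (2 * lab y2) mod m" "lab y1 < m" "lab y2 < m"
          using eq h a unfolding col_def by auto
        thus False using double_mod_inj[OF oddm] h by blast
      next
        case False
        hence w: "lab w < m" using a by simp
        show False
        proof (cases "lab y1 = m")
          case True
          hence "(2 * lab w) mod m = (lab w + lab y2) mod m" "lab y2 < m"
            using eq h a False unfolding col_def by auto
          hence "lab w = lab y2" using mod_add_cancel_lt[of "lab w" "lab w" m "lab y2"] w
            by (simp add: mult_2)
          thus False using h by simp
        next
          case False2: False
          show False
          proof (cases "lab y2 = m")
            case True
            hence "(2 * lab w) mod m = (lab w + lab y1) mod m" "lab y1 < m"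
              using eq h a False False2 unfolding col_def by auto
            hence "lab w = lab y1" using mod_add_cancel_lt[of "lab w" "lab w" m "lab y1"] w
              by (simp add: mult_2)
            thus False using h by simp
          next
            case False
            hence "(lab w + lab y1) mod m = (lab w + lab y2) mod m" "lab y1 < m" "lab y2 < m"
              using eq h a False2 \<open>lab w \<noteq> m\<close> unfolding col_def by auto
            thus False using mod_add_cancel_lt h by blast
          qed
        qed
      qed
    qed
  qed (auto simp: sym irr)
qed
definition wflip :: "nat \<Rightarrow> nat" where "wflip s = (if even s then s + 1 else s - 1)"
definition winA :: "(nat \<Rightarrow> nat) \<Rightarrow> nat \<Rightarrow> nat \<Rightarrow> bool" where
  "winA a i v \<longleftrightarrow> i - a i \<le> v \<and> v \<le> i + a i"
definition wkap :: "nat \<Rightarrow> nat \<Rightarrow> nat" where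
  "wkap k x = 2 * (x mod k) + (if x < k then 1 else 0)"
definition wcol :: "nat \<Rightarrow> (nat \<Rightarrow> nat) \<Rightarrow> nat \<Rightarrow> nat \<Rightarrow> nat" where
  "wcol k a x y = (if x = 2*k then wkap k y else if y = 2*k then wkap k x else
     (let s = (x + y) mod (2*k) in if winA a (s div 2) x \<and> winA a (s div 2) y then wflip s else s))"

lemma wflip_div [simp]: "wflip s div 2 = s div 2"
  unfolding wflip_def by (cases "even s") (auto elim: oddE)

lemma wflip_ne: "wflip s \<noteq> s"
  unfolding wflip_def by (cases "even s") (auto elim: oddE)

lemma wflip_inj: "wflip s = wflip t \<Longrightarrow> s = t"
  unfolding wflip_def by (auto split: if_splits; presburger)

lemma wflip_lt: "s < 2 * k \<Longrightarrow> wflip s < 2 * k"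
  unfolding wflip_def by (cases "even s") (auto elim!: evenE)

lemma wcol_sym: "wcol k a x y = wcol k a y x"
  unfolding wcol_def Let_def by (auto simp: add.commute)

lemma mod_two_cases:
  fixes x N :: nat
  assumes "x < 2 * N"
  shows "(x mod N = x \<and> x < N) \<or> (x mod N = x - N \<and> x \<ge> N)"
proof (cases "x < N")
  case True thus ?thesis by simp
next
  case False
  hence "x mod N = (x - N) mod N" by (simp add: le_mod_geq)
  also have "\<dots> = x - N" using assms False by simp
  finally show ?thesis using False by simp
qed

lemma wcol_lt:
  assumes "k \<ge> 1" "x \<le> 2*k" "y \<le> 2*k" "x \<noteq> y"
  shows "wcol k a x y < 2*k"
proof -
  have kap: "\<And>z. z < 2 * k \<Longrightarrow> wkap k z < 2 * k"
  proof -
    fix z assume "z < 2 * k"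
    have "z mod k < k" using assms(1) by simp
    hence "z mod k + 1 \<le> k" by simp
    thus "wkap k z < 2 * k" unfolding wkap_def by auto
  qed
  have s: "(x + y) mod (2 * k) < 2 * k" using assms(1) by simp
  show ?thesis using assms kap wflip_lt[OF s] s unfolding wcol_def Let_def by auto
qed

lemma wcol_div:
  assumes "x < 2*k" "y < 2*k"
  shows "wcol k a x y div 2 = ((x + y) mod (2*k)) div 2"
  using assms unfolding wcol_def Let_def by auto

lemma walecki_D:
  assumes ai: "a i \<le> i" and ik: "i < k"
    and pA: "winA a i p" and q: "q < 2*k"
    and s: "(p + q) mod (2*k) = 2*i \<or> (p + q) mod (2*k) = 2*i + 1"
    and qA: "\<not> winA a i q"
  shows "p = i - a i \<and> q = i + a i + 1"
proof -
  have p1: "i - a i \<le> p" "p \<le> i + a i" using pA unfolding winA_def by auto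
  have pq: "p + q < 2 * (2 * k)" using p1 ai ik q by linarith
  from mod_two_cases[OF pq] have c: "((p + q) mod (2*k) = p + q) \<or> ((p + q) mod (2*k) = p + q - 2*k \<and> p + q \<ge> 2*k)"
    by auto
  have ps: "p + q = 2*i \<or> p + q = 2*i + 1"
    using c s p1 ai ik q by linarith
  show ?thesis
  proof (cases "p + q = 2*i")
    case True
    hence "winA a i q" using p1 ai unfolding winA_def by linarith
    thus ?thesis using qA by simp
  next
    case False
    hence e: "p + q = 2*i + 1" using ps by simp
    have "q < i - a i \<or> q > i + a i" using qA unfolding winA_def by auto
    thus ?thesis using e p1 ai by linarith
  qed
qed

lemma wkap_div: "k \<ge> 1 \<Longrightarrow> wkap k x div 2 = x mod k"
  unfolding wkap_def by auto

lemma wkap_inj: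
  assumes "k \<ge> 1" "x < 2*k" "y < 2*k" "wkap k x = wkap k y"
  shows "x = y"
proof -
  have "x mod k = y mod k" using wkap_div[OF assms(1)] assms(4) by metis
  moreover have "(x < k) = (y < k)"
  proof -
    have "wkap k x mod 2 = wkap k y mod 2" using assms(4) by simp
    thus ?thesis unfolding wkap_def by (auto split: if_splits)
  qed
  ultimately show ?thesis using assms mod_two_cases[of x k] mod_two_cases[of y k] by auto
qed

lemma walecki_B:
  assumes k1: "k \<ge> 1" and ai: "\<And>i. i < k \<Longrightarrow> a i \<le> i"
    and p: "p < 2*k" and q: "q < 2*k" and pq: "p \<noteq> q"
    and eq: "wkap k p = wcol k a p q"
  shows "\<exists>i<k. p = i - a i \<and> q = i + a i + 1"
proof -
  define i where "i = p mod k"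
  have ik: "i < k" unfolding i_def using k1 by simp
  define s where "s = (p + q) mod (2*k)"
  have sdiv: "s div 2 = i"
    using wkap_div[OF k1, of p] wcol_div[OF p q, of a] eq unfolding s_def i_def by metis
  have col: "wcol k a p q = (if winA a i p \<and> winA a i q then wflip s else s)"
    using p q sdiv unfolding wcol_def s_def Let_def by auto
  have pq4: "p + q < 2 * (2 * k)" using p q by simp
  from mod_two_cases[OF pq4] have c: "(s = p + q) \<or> (s = p + q - 2*k \<and> p + q \<ge> 2*k)"
    unfolding s_def by auto
  have s2: "s = 2*i \<or> s = 2*i + 1" using sdiv by presburger
  show ?thesis
  proof (cases "p < k")
    case True
    hence pi: "p = i" unfolding i_def by simp
    have kp: "wkap k p = 2*i + 1" using True pi unfolding wkap_def by simp
    have "s \<noteq> 2*i" using c pi pq q by linarith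
    hence s1: "s = 2*i+1" using s2 by simp
    have "\<not> (winA a i p \<and> winA a i q)"
    proof
      assume A: "winA a i p \<and> winA a i q"
      have "wcol k a p q = wflip s" by (simp only: col if_P[OF A])
      also have "\<dots> = 2*i" using s1 unfolding wflip_def by simp
      finally show False using eq kp by simp
    qed
    moreover have "winA a i p" using pi unfolding winA_def by simp
    ultimately have "\<not> winA a i q" by simp
    hence "p = i - a i \<and> q = i + a i + 1"
      using walecki_D[OF ai[OF ik] ik \<open>winA a i p\<close> q] s1 unfolding s_def by blast
    thus ?thesis using ik by blast
  next
    case False
    hence pi: "p = i + k" unfolding i_def using p mod_two_cases[of p k] by auto
    have kp: "wkap k p = 2*i" using False unfolding wkap_def i_def by simp
    have "s \<noteq> 2*i" using c pi pq q ik by linarith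
    hence s1: "s = 2*i+1" using s2 by simp
    have "winA a i p \<and> winA a i q"
    proof (rule ccontr)
      assume A: "\<not> (winA a i p \<and> winA a i q)"
      have "wcol k a p q = s" by (simp only: col if_not_P[OF A])
      thus False using eq kp s1 by simp
    qed
    hence "p \<le> i + a i" unfolding winA_def by simp
    thus ?thesis using pi ai[OF ik] ik by linarith
  qed
qed

lemma walecki_core:
  assumes k1: "k \<ge> 1" and ai: "\<And>i. i < k \<Longrightarrow> a i \<le> i"
    and le: "p \<le> 2*k" "q1 \<le> 2*k" "q2 \<le> 2*k"
    and ne: "p \<noteq> q1" "p \<noteq> q2" "q1 \<noteq> q2"
    and eq: "wcol k a p q1 = wcol k a p q2"
  shows "\<exists>i<k. ({p, q1} = {i - a i, i + a i + 1} \<or> {p, q2} = {i - a i, i + a i + 1})"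
proof (cases "p = 2*k")
  case True
  hence "wkap k q1 = wkap k q2" "q1 < 2*k" "q2 < 2*k" using eq le ne unfolding wcol_def by auto
  hence "q1 = q2" using wkap_inj[OF k1] by blast
  thus ?thesis using ne by simp
next
  case pF: False
  hence p: "p < 2*k" using le by simp
  show ?thesis
  proof (cases "q1 = 2*k")
    case True
    hence q2: "q2 < 2*k" using le ne by auto
    have "wkap k p = wcol k a p q2" using eq True pF unfolding wcol_def by simp
    from walecki_B[OF k1 ai p q2 ne(2) this] show ?thesis by blast
  next
    case q1F: False
    hence q1: "q1 < 2*k" using le by simp
    show ?thesis
    proof (cases "q2 = 2*k")
      case True
      have "wkap k p = wcol k a p q1" using eq True pF unfolding wcol_def by simp
      from walecki_B[OF k1 ai p q1 ne(1) this] show ?thesis by blast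
    next
      case False
      hence q2: "q2 < 2*k" using le by simp
      define s1 where "s1 = (p + q1) mod (2*k)"
      define s2 where "s2 = (p + q2) mod (2*k)"
      have sne: "s1 \<noteq> s2" unfolding s1_def s2_def using mod_add_cancel_lt[of p q1 "2*k" q2] q1 q2 ne by blast
      define i where "i = s1 div 2"
      have "s2 div 2 = i"
        using wcol_div[OF p q1, of a] wcol_div[OF p q2, of a] eq unfolding i_def s1_def s2_def by metis
      have s1lt: "s1 < 2*k" unfolding s1_def using k1 by simp
      hence ik: "i < k" unfolding i_def by simp
      have c1: "wcol k a p q1 = (if winA a i p \<and> winA a i q1 then wflip s1 else s1)"
        using p q1 unfolding wcol_def s1_def i_def Let_def by auto
      have c2: "wcol k a p q2 = (if winA a i p \<and> winA a i q2 then wflip s2 else s2)"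
        using p q2 \<open>s2 div 2 = i\<close> unfolding wcol_def s2_def Let_def by auto
      have s1i: "s1 = 2*i \<or> s1 = 2*i+1" unfolding i_def by presburger
      have s2i: "s2 = 2*i \<or> s2 = 2*i+1" using \<open>s2 div 2 = i\<close> by presburger
      have "(winA a i p \<and> winA a i q1) \<noteq> (winA a i p \<and> winA a i q2)"
      proof
        assume h: "(winA a i p \<and> winA a i q1) = (winA a i p \<and> winA a i q2)"
        show False
        proof (cases "winA a i p \<and> winA a i q1")
          case True
          hence T2: "winA a i p \<and> winA a i q2" using h by simp
          have "wflip s1 = wflip s2" using eq by (simp only: c1 c2 if_P[OF True] if_P[OF T2])
          thus False using wflip_inj sne by blast
        next
          case False
          hence F2: "\<not> (winA a i p \<and> winA a i q2)" using h by simp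
          have "s1 = s2" using eq by (simp only: c1 c2 if_not_P[OF False] if_not_P[OF F2])
          thus False using sne by simp
        qed
      qed
      hence pA: "winA a i p" and "winA a i q1 \<noteq> winA a i q2" by auto
      thus ?thesis
      proof (cases "winA a i q1")
        case True
        hence "\<not> winA a i q2" using \<open>winA a i q1 \<noteq> winA a i q2\<close> by simp
        from walecki_D[OF ai[OF ik] ik pA q2 _ this] s2i have "p = i - a i \<and> q2 = i + a i + 1"
          unfolding s2_def by blast
        thus ?thesis using ik by blast
      next
        case False
        from walecki_D[OF ai[OF ik] ik pA q1 _ False] s1i have "p = i - a i \<and> q1 = i + a i + 1"
          unfolding s1_def by blast
        thus ?thesis using ik by blast
      qed
    qed
  qed
qed
lemma walecki_colouring:
  assumes k1: "k \<ge> 1"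
    and sym: "\<And>x y. x \<in> V \<Longrightarrow> y \<in> V \<Longrightarrow> E x y \<Longrightarrow> E y x"
    and irr: "\<And>x. x \<in> V \<Longrightarrow> \<not> E x x"
    and lab: "bij_betw lab V {0..<2*k+1}"
    and cond: "\<And>i. i < k \<Longrightarrow> \<exists>x\<in>V. \<exists>y\<in>V. \<not> E x y \<and> lab x + lab y = 2*i+1"
  shows "\<exists>c. proper_edge_colouring V E (2*k) c"
proof -
  have "\<forall>i. \<exists>x y. i < k \<longrightarrow> x \<in> V \<and> y \<in> V \<and> \<not> E x y \<and> lab x + lab y = 2*i+1"
    using cond by blast
  then obtain X Y where XY: "\<And>i. i < k \<Longrightarrow> X i \<in> V \<and> Y i \<in> V \<and> \<not> E (X i) (Y i) \<and> lab (X i) + lab (Y i) = 2*i+1"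
    by metis
  define a where "a i = i - min (lab (X i)) (lab (Y i))" for i
  have ai: "\<And>i. i < k \<Longrightarrow> a i \<le> i" unfolding a_def by simp
  have aset: "\<And>i. i < k \<Longrightarrow> {lab (X i), lab (Y i)} = {i - a i, i + a i + 1}"
  proof -
    fix i assume ik: "i < k"
    have s: "lab (X i) + lab (Y i) = 2*i+1" using XY[OF ik] by simp
    show "{lab (X i), lab (Y i)} = {i - a i, i + a i + 1}"
    proof (cases "lab (X i) \<le> lab (Y i)")
      case True
      hence "a i = i - lab (X i)" unfolding a_def by simp
      thus ?thesis using s True by auto
    next
      case False
      hence "a i = i - lab (Y i)" unfolding a_def by simp
      thus ?thesis using s False by auto
    qed
  qed
  have inj: "inj_on lab V" using lab bij_betw_def by blast
  have lable: "\<And>x. x \<in> V \<Longrightarrow> lab x \<le> 2*k"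
  proof -
    fix x assume "x \<in> V"
    hence "lab x \<in> {0..<2*k+1}" using lab unfolding bij_betw_def by blast
    thus "lab x \<le> 2*k" by simp
  qed
  show ?thesis
  proof (rule labelled_colouring[where col = "wcol k a" and lab = lab, OF inj sym irr])
    show "\<And>p q. wcol k a p q = wcol k a q p" by (rule wcol_sym)
    fix u v assume h: "u \<in> V" "v \<in> V" "E u v"
    hence "u \<noteq> v" using irr by auto
    hence "lab u \<noteq> lab v" using inj h unfolding inj_on_def by blast
    thus "wcol k a (lab u) (lab v) < 2 * k" using wcol_lt[OF k1] lable h by blast
  next
    fix w y1 y2 assume h: "w \<in> V" "y1 \<in> V" "y2 \<in> V" "E w y1" "E w y2"
      "lab y1 \<noteq> lab y2" "lab w \<noteq> lab y1" "lab w \<noteq> lab y2"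
    show "wcol k a (lab w) (lab y1) \<noteq> wcol k a (lab w) (lab y2)"
    proof
      assume eq: "wcol k a (lab w) (lab y1) = wcol k a (lab w) (lab y2)"
      obtain i where ik: "i < k" and
        d: "{lab w, lab y1} = {i - a i, i + a i + 1} \<or> {lab w, lab y2} = {i - a i, i + a i + 1}"
        using walecki_core[OF k1 ai lable[OF h(1)] lable[OF h(2)] lable[OF h(3)] h(7,8,6) eq] by blast
      have XYi: "X i \<in> V" "Y i \<in> V" "\<not> E (X i) (Y i)" using XY[OF ik] by auto
      have key: "\<And>y. y \<in> V \<Longrightarrow> E w y \<Longrightarrow> {lab w, lab y} = {i - a i, i + a i + 1} \<Longrightarrow> False"
      proof -
        fix y assume y: "y \<in> V" "E w y" "{lab w, lab y} = {i - a i, i + a i + 1}"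
        hence "{lab w, lab y} = {lab (X i), lab (Y i)}" using aset[OF ik] by simp
        hence "(lab w = lab (X i) \<and> lab y = lab (Y i)) \<or> (lab w = lab (Y i) \<and> lab y = lab (X i))"
          by (auto simp: doubleton_eq_iff)
        hence "(w = X i \<and> y = Y i) \<or> (w = Y i \<and> y = X i)"
          using inj h(1) y(1) XYi unfolding inj_on_def by blast
        thus False using y(2) XYi sym by blast
      qed
      show False using d key h by blast
    qed
  qed
qed
lemma labelling_exists:
  assumes fin: "finite V" and cardV: "card V = 2*k+1"
    and S0: "S0 \<subseteq> V" and T0: "T0 \<subseteq> V" and disj: "S0 \<inter> T0 = {}"
    and cS: "card S0 = s" and cT: "card T0 = q"
    and s1: "s \<ge> 1" and sk: "s \<le> k" and qk: "(q - 1) * s < k" and q1: "q \<ge> 1"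
  shows "\<exists>lab. bij_betw lab V {0..<2*k+1} \<and> (\<forall>a<s. \<exists>x\<in>S0. lab x = 2*a+1)
              \<and> (\<forall>j<q. \<exists>y\<in>T0. lab y = 2*j*s)"
proof -
  define LS where "LS = (\<lambda>a. 2*a+1) ` {..<s}"
  define LT where "LT = (\<lambda>j. 2*j*s) ` {..<q}"
  define RV where "RV = V - S0 - T0"
  define RL where "RL = {0..<2*k+1} - LS - LT"
  have LSsub: "LS \<subseteq> {0..<2*k+1}" unfolding LS_def using sk by auto
  have LTsub: "LT \<subseteq> {0..<2*k+1}"
  proof
    fix x assume "x \<in> LT"
    then obtain j where j: "j < q" "x = 2*j*s" unfolding LT_def by auto
    have "j \<le> q - 1" using j by simp
    hence "j * s \<le> (q - 1) * s" by (rule mult_right_mono) simp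
    hence "j * s < k" using qk by linarith
    thus "x \<in> {0..<2*k+1}" using j by simp
  qed
  have LST: "LS \<inter> LT = {}"
  proof -
    have o: "\<And>a b::nat. 2*a+1 \<noteq> 2*b" by presburger
    have "\<And>a j. 2*a+1 \<noteq> 2*j*s" using o by (metis mult.assoc)
    thus ?thesis unfolding LS_def LT_def by auto
  qed
  have cLS: "card LS = s" unfolding LS_def by (subst card_image) (auto simp: inj_on_def)
  have cLT: "card LT = q" unfolding LT_def using s1 by (subst card_image) (auto simp: inj_on_def)
  have finS0: "finite S0" "finite T0" using fin S0 T0 finite_subset by auto
  have cRV: "card RV = 2*k+1 - s - q"
  proof -
    have "card RV = card (V - (S0 \<union> T0))" unfolding RV_def by (simp add: Diff_Un set_diff_eq)
    also have "\<dots> = card V - card (S0 \<union> T0)" using S0 T0 fin by (subst card_Diff_subset) (auto intro: finite_subset)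
    also have "card (S0 \<union> T0) = s + q" using card_Un_disjoint[OF finS0 disj] cS cT by simp
    finally show ?thesis using cardV by simp
  qed
  have cRL: "card RL = 2*k+1 - s - q"
  proof -
    have "card RL = card ({0..<2*k+1} - (LS \<union> LT))" unfolding RL_def by (simp add: Diff_Un set_diff_eq)
    also have "\<dots> = card {0..<2*k+1} - card (LS \<union> LT)" using LSsub LTsub
      by (subst card_Diff_subset) (auto intro: finite_subset)
    also have "card (LS \<union> LT) = s + q"
      using card_Un_disjoint[of LS LT] LST cLS cLT LSsub LTsub finite_subset by fastforce
    finally show ?thesis by simp
  qed
  obtain fS where fS: "bij_betw fS S0 LS"
    using finite_same_card_bij[of S0 LS] finS0 cS cLS LSsub finite_subset by fastforce
  obtain fT where fT: "bij_betw fT T0 LT"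
    using finite_same_card_bij[of T0 LT] finS0 cT cLT LTsub finite_subset by fastforce
  obtain fR where fR: "bij_betw fR RV RL"
    using finite_same_card_bij[of RV RL] cRV cRL fin unfolding RV_def RL_def by fastforce
  define lab where "lab x = (if x \<in> S0 then fS x else if x \<in> T0 then fT x else fR x)" for x
  have b1: "bij_betw lab S0 LS" using fS by (rule bij_betw_cong[THEN iffD1, rotated]) (simp add: lab_def)
  have b2: "bij_betw lab T0 LT" using fT disj by (intro bij_betw_cong[THEN iffD1, OF _ fT]) (auto simp: lab_def)
  have b3: "bij_betw lab RV RL" using fR by (intro bij_betw_cong[THEN iffD1, OF _ fR]) (auto simp: lab_def RV_def)
  have b12: "bij_betw lab (S0 \<union> T0) (LS \<union> LT)" using bij_betw_combine[OF b1 b2 LST] .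
  have "bij_betw lab ((S0 \<union> T0) \<union> RV) ((LS \<union> LT) \<union> RL)"
    by (rule bij_betw_combine[OF b12 b3]) (auto simp: RL_def)
  moreover have "(S0 \<union> T0) \<union> RV = V" unfolding RV_def using S0 T0 by auto
  moreover have "(LS \<union> LT) \<union> RL = {0..<2*k+1}" unfolding RL_def using LSsub LTsub by auto
  ultimately have bij: "bij_betw lab V {0..<2*k+1}" by simp
  have "\<forall>a<s. \<exists>x\<in>S0. lab x = 2*a+1"
  proof (intro allI impI)
    fix a assume "a < s"
    hence "2*a+1 \<in> LS" unfolding LS_def by auto
    thus "\<exists>x\<in>S0. lab x = 2*a+1" using b1 unfolding bij_betw_def by (metis imageE)
  qed
  moreover have "\<forall>j<q. \<exists>y\<in>T0. lab y = 2*j*s"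
  proof (intro allI impI)
    fix j assume "j < q"
    hence "2*j*s \<in> LT" unfolding LT_def by auto
    thus "\<exists>y\<in>T0. lab y = 2*j*s" using b2 unfolding bij_betw_def by (metis imageE)
  qed
  ultimately show ?thesis using bij by blast
qed

lemma bipartite_nonadj_colouring:
  assumes fin: "finite V" and cardV: "card V = 2*k+1" and k1: "k \<ge> 1"
    and sym: "\<And>x y. x \<in> V \<Longrightarrow> y \<in> V \<Longrightarrow> E x y \<Longrightarrow> E y x"
    and irr: "\<And>x. x \<in> V \<Longrightarrow> \<not> E x x"
    and S0: "S0 \<subseteq> V" and T0: "T0 \<subseteq> V" and disj: "S0 \<inter> T0 = {}"
    and cS: "card S0 = s" and cT: "card T0 = q"
    and s1: "s \<ge> 1" and sk: "s \<le> k" and qk: "(q - 1) * s < k" and kq: "k \<le> q * s"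
    and nadj: "\<And>x y. x \<in> S0 \<Longrightarrow> y \<in> T0 \<Longrightarrow> \<not> E x y"
  shows "\<exists>c. proper_edge_colouring V E (2*k) c"
proof -
  have q1: "q \<ge> 1" using kq k1 by (cases q) auto
  obtain lab where lab: "bij_betw lab V {0..<2*k+1}"
    and LS: "\<forall>a<s. \<exists>x\<in>S0. lab x = 2*a+1" and LT: "\<forall>j<q. \<exists>y\<in>T0. lab y = 2*j*s"
    using labelling_exists[OF fin cardV S0 T0 disj cS cT s1 sk qk q1] by blast
  show ?thesis
  proof (rule walecki_colouring[OF k1 sym irr lab])
    fix i assume ik: "i < k"
    define a j where "a = i mod s" and "j = i div s"
    have as: "a < s" unfolding a_def using s1 by simp
    have jq: "j < q"
    proof (rule ccontr)
      assume "\<not> j < q"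
      hence "q * s \<le> j * s" by simp
      also have "j * s \<le> i" unfolding j_def by (metis div_mult_mod_eq le_add1)
      finally show False using ik kq by simp
    qed
    obtain x where x: "x \<in> S0" "lab x = 2*a+1" using LS as by blast
    obtain y where y: "y \<in> T0" "lab y = 2*j*s" using LT jq by blast
    have "lab x + lab y = 2*(a + j*s) + 1" using x y by simp
    also have "a + j * s = i" unfolding a_def j_def by simp
    finally show "\<exists>x\<in>V. \<exists>y\<in>V. \<not> E x y \<and> lab x + lab y = 2*i+1"
      using x y nadj S0 T0 by blast
  qed
qed
lemma graph_edges_Pow: "graph_edges V E \<subseteq> Pow V"
  unfolding graph_edges_def by auto

lemma vertex_degree_le:
  assumes fin: "finite V" and irr: "\<And>x. x \<in> V \<Longrightarrow> \<not> E x x" and v: "v \<in> V"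
  shows "vertex_degree V E v \<le> card V - 1"
proof -
  have "{u \<in> V. E v u} \<subseteq> V - {v}" using irr v by auto
  hence "card {u \<in> V. E v u} \<le> card (V - {v})" using fin by (intro card_mono) auto
  thus ?thesis unfolding vertex_degree_def using v fin by simp
qed

lemma max_degree_universal:
  assumes fin: "finite V" and irr: "\<And>x. x \<in> V \<Longrightarrow> \<not> E x x" and v0: "v0 \<in> V"
    and univ: "\<And>u. u \<in> V \<Longrightarrow> u \<noteq> v0 \<Longrightarrow> E v0 u"
  shows "max_degree V E = card V - 1"
proof -
  have "{u \<in> V. E v0 u} = V - {v0}" using univ irr v0 by auto
  hence d0: "vertex_degree V E v0 = card V - 1" unfolding vertex_degree_def using fin v0 by simp
  show ?thesis unfolding max_degree_def
  proof (rule Max_eqI)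
    show "finite (vertex_degree V E ` V)" using fin by simp
    show "\<And>y. y \<in> vertex_degree V E ` V \<Longrightarrow> y \<le> card V - 1" using vertex_degree_le[of V E, OF fin irr] by auto
    show "card V - 1 \<in> vertex_degree V E ` V" using d0 v0 by force
  qed
qed

lemma chromatic_le:
  assumes "proper_edge_colouring V E K c"
  shows "edge_chromatic_number V E \<le> K"
  unfolding edge_chromatic_number_def using assms by (intro Least_le) blast

lemma not_class2_if_colouring:
  assumes fin: "finite V" and irr: "\<And>x. x \<in> V \<Longrightarrow> \<not> E x x" and v0: "v0 \<in> V"
    and univ: "\<And>u. u \<in> V \<Longrightarrow> u \<noteq> v0 \<Longrightarrow> E v0 u"
    and col: "proper_edge_colouring V E (card V - 1) c"
  shows "\<not> is_class2 V E"
  using chromatic_le[OF col] max_degree_universal[of V E v0, OF fin irr v0 univ] unfolding is_class2_def by simp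

lemma proper_mono:
  assumes "proper_edge_colouring V E K c" "K \<le> K'"
  shows "proper_edge_colouring V E K' c"
  using assms unfolding proper_edge_colouring_def by fastforce

lemma proper_lt:
  assumes "proper_edge_colouring V E K c" "e \<in> graph_edges V E"
  shows "c e < K"
  using assms unfolding proper_edge_colouring_def by blast

lemma proper_distinct:
  assumes "proper_edge_colouring V E K c" "e1 \<in> graph_edges V E" "e2 \<in> graph_edges V E"
    "e1 \<noteq> e2" "e1 \<inter> e2 \<noteq> {}"
  shows "c e1 \<noteq> c e2"
  using assms unfolding proper_edge_colouring_def by blast

lemma complete_no_colouring:
  assumes fin: "finite V" and odd: "odd (card V)" and n3: "card V \<ge> 3"
    and comp: "\<And>u v. u \<in> V \<Longrightarrow> v \<in> V \<Longrightarrow> E u v \<longleftrightarrow> u \<noteq> v"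
    and col: "proper_edge_colouring V E (card V - 1) c"
  shows False
proof -
  define n where "n = card V"
  have edge: "\<And>u v. u \<in> V \<Longrightarrow> v \<in> V \<Longrightarrow> u \<noteq> v \<Longrightarrow> {u, v} \<in> graph_edges V E"
    unfolding graph_edges_def using comp by blast
  have cov: "\<exists>e \<in> graph_edges V E. v \<in> e \<and> c e = 0" if v: "v \<in> V" for v
  proof -
    define Ev where "Ev = (\<lambda>u. {v, u}) ` (V - {v})"
    have EvE: "Ev \<subseteq> graph_edges V E"
    proof
      fix e assume "e \<in> Ev"
      then obtain u where "u \<in> V" "u \<noteq> v" "e = {v, u}" unfolding Ev_def by blast
      thus "e \<in> graph_edges V E" using edge v by blast
    qed
    have vEv: "\<And>e. e \<in> Ev \<Longrightarrow> v \<in> e" unfolding Ev_def by blast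
    have injE: "inj_on (\<lambda>u. {v, u}) (V - {v})"
    proof (rule inj_onI)
      fix x y assume "x \<in> V - {v}" "y \<in> V - {v}" "{v, x} = {v, y}"
      thus "x = y" by (metis Diff_iff doubleton_eq_iff singletonI)
    qed
    have "card Ev = card (V - {v})" unfolding Ev_def by (rule card_image[OF injE])
    hence cEv: "card Ev = n - 1" unfolding n_def using fin v by simp
    have injc: "inj_on c Ev"
    proof (rule inj_onI)
      fix e1 e2 assume h: "e1 \<in> Ev" "e2 \<in> Ev" "c e1 = c e2"
      show "e1 = e2"
      proof (rule ccontr)
        assume ne: "e1 \<noteq> e2"
        have "v \<in> e1 \<inter> e2" using vEv h by blast
        hence "e1 \<inter> e2 \<noteq> {}" by blast
        hence "c e1 \<noteq> c e2" using proper_distinct[OF col] EvE h(1,2) ne by blast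
        thus False using h(3) by simp
      qed
    qed
    have sub: "c ` Ev \<subseteq> {0..<n - 1}"
    proof
      fix x assume "x \<in> c ` Ev"
      then obtain e where "e \<in> Ev" "x = c e" by blast
      hence "x < card V - 1" using proper_lt[OF col] EvE by blast
      thus "x \<in> {0..<n - 1}" unfolding n_def by simp
    qed
    have "card (c ` Ev) = n - 1" using card_image[OF injc] cEv by simp
    hence "c ` Ev = {0..<n - 1}" using sub by (intro card_subset_eq) auto
    moreover have "0 \<in> {0..<n - 1}" using n3 unfolding n_def by simp
    ultimately obtain e where e: "e \<in> Ev" "c e = 0" by (metis imageE)
    have "v \<in> e" using e(1) vEv by blast
    moreover have "e \<in> graph_edges V E" using EvE e(1) by blast
    ultimately show ?thesis using e(2) by blast
  qed
  define C0 where "C0 = {e \<in> graph_edges V E. c e = 0}"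
  have finE: "finite (graph_edges V E)"
    using graph_edges_Pow[of V E] fin by (meson finite_Pow_iff finite_subset)
  have finC0: "finite C0" unfolding C0_def using finE by simp
  have C0E: "\<And>e. e \<in> C0 \<Longrightarrow> e \<in> graph_edges V E \<and> c e = 0" unfolding C0_def by simp
  have UC: "\<Union> C0 = V"
  proof
    show "\<Union> C0 \<subseteq> V"
    proof
      fix x assume "x \<in> \<Union> C0"
      then obtain e where "e \<in> C0" "x \<in> e" by blast
      thus "x \<in> V" using C0E graph_edges_Pow[of V E] by blast
    qed
    show "V \<subseteq> \<Union> C0"
    proof
      fix v assume "v \<in> V"
      then obtain e where "e \<in> graph_edges V E" "v \<in> e" "c e = 0" using cov by blast
      hence "e \<in> C0" unfolding C0_def by simp
      thus "v \<in> \<Union> C0" using \<open>v \<in> e\<close> by blast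
    qed
  qed
  have card2: "\<And>e. e \<in> C0 \<Longrightarrow> card e = 2"
  proof -
    fix e assume "e \<in> C0"
    hence "e \<in> graph_edges V E" using C0E by blast
    then obtain u v where uv: "e = {u, v}" "u \<in> V" "v \<in> V" "E u v" by (rule graph_edges_elem)
    hence "u \<noteq> v" using comp by blast
    thus "card e = 2" using uv(1) by simp
  qed
  have fine: "\<And>e. e \<in> C0 \<Longrightarrow> finite e"
  proof -
    fix e assume "e \<in> C0"
    hence "card e > 0" using card2 by simp
    thus "finite e" by (rule card_ge_0_finite)
  qed
  have disj: "pairwise disjnt C0"
  proof (unfold pairwise_def disjnt_def, intro ballI impI)
    fix e1 e2 assume h: "e1 \<in> C0" "e2 \<in> C0" "e1 \<noteq> e2"
    show "e1 \<inter> e2 = {}"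
    proof (rule ccontr)
      assume "e1 \<inter> e2 \<noteq> {}"
      hence "c e1 \<noteq> c e2" using proper_distinct[OF col] h C0E by blast
      thus False using h C0E by simp
    qed
  qed
  have "card (\<Union> C0) = sum card C0" by (rule card_Union_disjoint[OF disj fine])
  also have "\<dots> = sum (\<lambda>_. 2) C0" using card2 by (rule sum.cong[OF refl])
  also have "\<dots> = 2 * card C0" by simp
  finally have "card V = 2 * card C0" using UC by simp
  thus False using odd by simp
qed

lemma complete_class2:
  assumes fin: "finite V" and odd: "odd (card V)" and n3: "card V \<ge> 3"
    and comp: "\<And>u v. u \<in> V \<Longrightarrow> v \<in> V \<Longrightarrow> E u v \<longleftrightarrow> u \<noteq> v"
  shows "is_class2 V E"
proof -
  have sym: "\<And>x y. x \<in> V \<Longrightarrow> y \<in> V \<Longrightarrow> E x y \<Longrightarrow> E y x" using comp by blast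
  have irr: "\<And>x. x \<in> V \<Longrightarrow> \<not> E x x" using comp by blast
  obtain v0 where v0: "v0 \<in> V" using n3 by (metis card.empty ex_in_conv not_numeral_le_zero)
  have md: "max_degree V E = card V - 1" using max_degree_universal[of V E v0, OF fin irr v0] comp v0 by blast
  obtain c0 where c0: "proper_edge_colouring V E (card V) c0" using sum_colouring[of V E, OF fin sym irr] by blast
  have "edge_chromatic_number V E = card V"
    unfolding edge_chromatic_number_def
  proof (rule Least_equality)
    show "\<exists>c. proper_edge_colouring V E (card V) c" using c0 by blast
    fix K assume "\<exists>c. proper_edge_colouring V E K c"
    then obtain c where c: "proper_edge_colouring V E K c" by blast
    show "card V \<le> K"
    proof (rule ccontr)
      assume "\<not> card V \<le> K"
      hence "K \<le> card V - 1" by simp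
      from complete_no_colouring[OF fin odd n3 comp proper_mono[OF c this]] show False .
    qed
  qed
  thus ?thesis unfolding is_class2_def using md n3 by simp
qed
lemma power_adj_sym: "power_adj G a b \<Longrightarrow> power_adj G b a"
  unfolding power_adj_def by auto

lemma power_adj_irr: "\<not> power_adj G a a"
  unfolding power_adj_def by auto

lemma (in group) power_adj_one:
  assumes "x \<in> carrier G" "x \<noteq> \<one>"
  shows "power_adj G \<one> x"
proof -
  have "\<one> = x [^] (0::int)" by simp
  thus ?thesis unfolding power_adj_def using assms by blast
qed

lemma (in group) pow_exists_if_gcd_dvd:
  assumes g: "g \<in> carrier G" and d: "gcd i (int (ord g)) dvd j"
  shows "\<exists>m::int. g [^] j = (g [^] i) [^] m"
proof -
  define N where "N = int (ord g)"
  obtain s t where st: "s * i + t * N = gcd i N" using bezout_int by blast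
  obtain r where r: "j = gcd i N * r" using d unfolding N_def by (auto elim: dvdE)
  have jj: "j = (s * i + t * N) * r" using st r by simp
  have "i * (s * r) - j = - (t * N * r)" unfolding jj by (simp add: algebra_simps)
  hence "N dvd (i * (s * r) - j)" by simp
  hence "g [^] j = g [^] (i * (s * r))" using int_pow_eq[OF g] unfolding N_def by simp
  also have "\<dots> = (g [^] i) [^] (s * r)" using int_pow_pow[OF g] by simp
  finally show ?thesis by blast
qed

lemma primepow_divisors_comparable:
  fixes d1 d2 :: int
  assumes p: "prime (p::nat)" and "d1 \<ge> 0" "d2 \<ge> 0" "d1 dvd int (p ^ a)" "d2 dvd int (p ^ a)"
  shows "d1 dvd d2 \<or> d2 dvd d1"
proof -
  have "nat d1 dvd p ^ a" "nat d2 dvd p ^ a" using assms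
    by (metis nat_dvd_iff nat_int zero_le_imp_eq_int)+
  then obtain u v where "nat d1 = p ^ u" "nat d2 = p ^ v"
    using divides_primepow_nat[OF p] by blast
  hence "nat d1 dvd nat d2 \<or> nat d2 dvd nat d1"
    by (metis le_cases le_imp_power_dvd)
  thus ?thesis using assms(2,3) by (metis int_dvd_int_iff int_nat_eq)
qed

lemma (in group) generator_ord:
  assumes fin: "finite (carrier G)" and g: "g \<in> carrier G"
    and gen: "carrier G = range (\<lambda>n::int. g [^] n)"
  shows "ord g = order G"
proof -
  have "generate G {g} = carrier G" using generate_pow[OF g] gen by auto
  thus ?thesis using generate_pow_card[OF g] unfolding order_def by simp
qed

lemma (in group) cyclic_prime_power_complete:
  assumes fin: "finite (carrier G)" and cyc: "cyclic_group G" and p: "prime p"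
    and ordG: "order G = p ^ a"
    and x: "x \<in> carrier G" and y: "y \<in> carrier G" and xy: "x \<noteq> y"
  shows "power_adj G x y"
proof -
  obtain g where g: "g \<in> carrier G" and gen: "carrier G = range (\<lambda>n::int. g [^] n)"
    using cyc cyclic_group by blast
  have og: "ord g = p ^ a" using generator_ord[OF fin g gen] ordG by simp
  obtain i j where ij: "x = g [^] (i::int)" "y = g [^] (j::int)" using x y gen by auto
  define N where "N = int (ord g)"
  have c: "gcd i N dvd gcd j N \<or> gcd j N dvd gcd i N"
    by (rule primepow_divisors_comparable[OF p]) (auto simp: N_def og)
  thus ?thesis
  proof
    assume "gcd i N dvd gcd j N"
    hence "gcd i N dvd j" by (meson dvd_trans gcd_dvd1)
    then obtain m :: int where "g [^] j = (g [^] i) [^] m" using pow_exists_if_gcd_dvd[OF g] unfolding N_def by blast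
    thus ?thesis unfolding power_adj_def using ij xy by blast
  next
    assume "gcd j N dvd gcd i N"
    hence "gcd j N dvd i" by (meson dvd_trans gcd_dvd1)
    then obtain m :: int where "g [^] i = (g [^] j) [^] m" using pow_exists_if_gcd_dvd[OF g] unfolding N_def by blast
    thus ?thesis unfolding power_adj_def using ij xy by blast
  qed
qed

lemma (in group) both_pow_one:
  assumes z: "z \<in> carrier G" and "z [^] (A::nat) = \<one>" "z [^] (B::nat) = \<one>" "coprime A B"
  shows "z = \<one>"
proof -
  have "ord z dvd A" "ord z dvd B" using assms pow_eq_id by auto
  hence "ord z dvd gcd A B" by simp
  hence "ord z dvd 1" using assms(4) by simp
  hence "ord z = 1" by simp
  hence "z [^] (1::nat) = \<one>" using pow_ord_eq_1[OF z] by metis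
  thus ?thesis using z by (metis nat_pow_eone)
qed

lemma (in group) pow_of_torsion:
  assumes x: "x \<in> carrier G" and xa: "x [^] (A::nat) = \<one>"
  shows "(x [^] (m::int)) [^] A = \<one>"
proof -
  have "(x [^] m) [^] (int A) = x [^] (m * int A)" using int_pow_pow[OF x] by simp
  also have "\<dots> = (x [^] (int A)) [^] m" using int_pow_pow[OF x] by (simp add: mult.commute)
  also have "x [^] (int A) = \<one>" using xa by (simp add: int_pow_int)
  finally show ?thesis by (simp add: int_pow_int)
qed

lemma (in group) coprime_nonadj:
  assumes x: "x \<in> carrier G" and y: "y \<in> carrier G"
    and xa: "x [^] (A::nat) = \<one>" and yb: "y [^] (B::nat) = \<one>" and cop: "coprime A B"
    and x1: "x \<noteq> \<one>" and y1: "y \<noteq> \<one>"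
  shows "\<not> power_adj G x y"
proof
  assume "power_adj G x y"
  then consider (a) m where "y = x [^] (m::int)" | (b) m where "x = y [^] (m::int)"
    unfolding power_adj_def by blast
  thus False
  proof cases
    case a
    hence "y [^] A = \<one>" using pow_of_torsion[OF x xa] by simp
    thus False using both_pow_one[OF y _ yb cop] y1 by blast
  next
    case b
    hence "x [^] B = \<one>" using pow_of_torsion[OF y yb] by simp
    thus False using both_pow_one[OF x xa _ cop] x1 by blast
  qed
qed
lemma (in group) noncyclic_star:
  assumes fin: "finite (carrier G)" and nc: "\<not> cyclic_group G"
  shows "\<exists>g\<in>carrier G. \<exists>Y. Y \<subseteq> carrier G \<and> g \<notin> Y \<and> order G \<le> 2 * card Y
            \<and> (\<forall>y\<in>Y. \<not> power_adj G g y)"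
proof -
  define H where "H x = range (\<lambda>n::int. x [^] n)" for x
  have Hsub: "\<And>x. x \<in> carrier G \<Longrightarrow> H x \<subseteq> carrier G" unfolding H_def by auto
  have Hfin: "\<And>x. x \<in> carrier G \<Longrightarrow> finite (H x)" using Hsub fin finite_subset by blast
  have ne: "carrier G \<noteq> {}" by auto
  define m where "m = Max ((\<lambda>x. card (H x)) ` carrier G)"
  have "m \<in> (\<lambda>x. card (H x)) ` carrier G" unfolding m_def using fin ne by (intro Max_in) auto
  then obtain g where g: "g \<in> carrier G" "card (H g) = m" by auto
  have gmax: "\<And>x. x \<in> carrier G \<Longrightarrow> card (H x) \<le> card (H g)"
  proof -
    fix x assume "x \<in> carrier G"
    hence "card (H x) \<in> (\<lambda>x. card (H x)) ` carrier G" by blast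
    hence "card (H x) \<le> m" unfolding m_def using fin by (intro Max_ge) auto
    thus "card (H x) \<le> card (H g)" using g by simp
  qed
  have gH: "g \<in> H g" unfolding H_def using g by (metis int_pow_1 rangeI)
  have Hne: "H g \<noteq> carrier G" using nc cyclic_group g unfolding H_def by blast
  have "generate G {g} = H g" using generate_pow[OF g(1)] unfolding H_def by auto
  hence sub: "subgroup (H g) G" using generate_is_subgroup[of "{g}"] g by simp
  have lag: "card (rcosets (H g)) * card (H g) = order G" using lagrange[OF sub] .
  have ltn: "card (H g) < order G" unfolding order_def
    using Hne Hsub[OF g(1)] fin by (simp add: psubsetI psubset_card_mono)
  have "order G > 0" using fin ne unfolding order_def by (simp add: card_gt_0_iff)
  then have r2: "card (rcosets (H g)) \<ge> 2" using lag ltn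
    by (metis One_nat_def less_2_cases_iff mult_0 mult_1 not_le order_less_irrefl)
  have two: "2 * card (H g) \<le> order G"
    using lag r2 by (metis mult_le_mono1)
  define Y where "Y = carrier G - H g"
  have cY: "card Y = order G - card (H g)" unfolding Y_def order_def
    using Hsub[OF g(1)] fin by (simp add: card_Diff_subset Hfin[OF g(1)])
  have "order G \<le> 2 * card Y" using cY two ltn by simp
  moreover have "\<forall>y\<in>Y. \<not> power_adj G g y"
  proof
    fix y assume y: "y \<in> Y"
    hence yc: "y \<in> carrier G" "y \<notin> H g" unfolding Y_def by auto
    show "\<not> power_adj G g y"
    proof
      assume "power_adj G g y"
      then consider (a) n where "y = g [^] (n::int)" | (b) n where "g = y [^] (n::int)"
        unfolding power_adj_def by blast
      thus False
      proof cases
        case a thus False using yc unfolding H_def by auto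
      next
        case b
        have "H g \<subseteq> H y"
        proof
          fix z assume "z \<in> H g"
          then obtain i where "z = g [^] (i::int)" unfolding H_def by auto
          hence "z = y [^] (n * i)" using b int_pow_pow[OF yc(1)] by simp
          thus "z \<in> H y" unfolding H_def by auto
        qed
        moreover have "card (H y) \<le> card (H g)" using gmax yc by simp
        ultimately have "H g = H y" using Hfin[OF yc(1)] card_seteq by blast
        moreover have "y \<in> H y" unfolding H_def using yc by (metis int_pow_1 rangeI)
        ultimately show False using yc by simp
      qed
    qed
  qed
  moreover have "g \<notin> Y" unfolding Y_def using gH by simp
  moreover have "Y \<subseteq> carrier G" unfolding Y_def by auto
  ultimately show ?thesis using g(1) by blast
qed

lemma arith_AB:
  fixes A B k :: nat
  assumes "A \<ge> 3" "B \<ge> 3" "A * B = 2*k+1"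
  shows "A - 1 \<le> k" "k \<le> (A - 1) * (B - 1)"
proof -
  obtain a b where ab: "A = a + 3" "B = b + 3" using assms(1,2) by (metis add.commute le_Suc_ex)
  have e: "a * b + 3 * a + 3 * b + 9 = 2 * k + 1" using assms(3) unfolding ab by (simp add: algebra_simps)
  show "A - 1 \<le> k" using e unfolding ab by simp
  have "(A - 1) * (B - 1) = a * b + 2 * a + 2 * b + 4" unfolding ab by (simp add: algebra_simps)
  thus "k \<le> (A - 1) * (B - 1)" using e by simp
qed

lemma ceil_div_facts:
  fixes k s :: nat
  assumes s1: "s \<ge> 1" and k1: "k \<ge> 1"
  defines "q \<equiv> (k + s - 1) div s"
  shows "k \<le> q * s" "(q - 1) * s < k" "\<And>b. k \<le> b * s \<Longrightarrow> q \<le> b"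
proof -
  define r where "r = (k + s - 1) mod s"
  have d: "q * s + r = k + s - 1" unfolding q_def r_def by (simp add: div_mult_mod_eq)
  have r: "r < s" unfolding r_def using s1 by simp
  show kq: "k \<le> q * s" using d r by linarith
  have "q * s \<le> k + s - 1" using d by linarith
  hence "q * s - s < k" using s1 k1 by linarith
  thus "(q - 1) * s < k" by (simp add: diff_mult_distrib)
  fix b assume "k \<le> b * s"
  hence "q * s < (b + 1) * s" using d r by (simp add: algebra_simps)
  hence "q < b + 1" by (metis mult_less_cancel2)
  thus "q \<le> b" by simp
qed

lemma (in group) cyclic_nonpp_sets:
  assumes fin: "finite (carrier G)" and cyc: "cyclic_group G"
    and ordG: "order G = A * B" and cop: "coprime A B" and A3: "A \<ge> 3" and B3: "B \<ge> 3"
    and kk: "order G = 2*k+1"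
  shows "\<exists>S0 T0 s q. S0 \<subseteq> carrier G \<and> T0 \<subseteq> carrier G \<and> S0 \<inter> T0 = {} \<and> card S0 = s
     \<and> card T0 = q \<and> s \<ge> 1 \<and> s \<le> k \<and> (q - 1) * s < k \<and> k \<le> q * s
     \<and> (\<forall>x\<in>S0. \<forall>y\<in>T0. \<not> power_adj G x y)"
proof -
  obtain g where g: "g \<in> carrier G" and gen: "carrier G = range (\<lambda>n::int. g [^] n)"
    using cyc cyclic_group by blast
  have og: "ord g = A * B" using generator_ord[OF fin g gen] ordG by simp
  have AB: "A * B = 2*k+1" using ordG kk by simp
  note ar = arith_AB[OF A3 B3 AB]
  define s where "s = A - 1"
  have s1: "s \<ge> 1" unfolding s_def using A3 by simp
  have k1: "k \<ge> 1" using ar s1 unfolding s_def by simp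
  define q where "q = (k + s - 1) div s"
  note cq = ceil_div_facts[OF s1 k1, folded q_def]
  have qB: "q \<le> B - 1" using cq(3)[of "B - 1"] ar(2) unfolding s_def by (simp add: mult.commute)
  define S0 where "S0 = (\<lambda>j. g [^] (B * j)) ` {1..<A}"
  define T0 where "T0 = (\<lambda>j. g [^] (A * j)) ` {1..q}"
  have inj0: "inj_on (\<lambda>x. g [^] x) {0..ord g - 1}" using ord_inj[OF g] .
  have injS: "inj_on (\<lambda>j. g [^] (B * j)) {1..<A}"
  proof (rule inj_onI)
    fix i j assume h: "i \<in> {1..<A}" "j \<in> {1..<A}" "g [^] (B * i) = g [^] (B * j)"
    have "B * i \<le> B * (A - 1)" "B * j \<le> B * (A - 1)" using h by auto
    moreover have "B * (A - 1) \<le> ord g - 1" using og A3 B3 by (simp add: algebra_simps)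
    ultimately have "B * i \<le> ord g - 1" "B * j \<le> ord g - 1" by linarith+
    hence "B * i \<in> {0..ord g - 1}" "B * j \<in> {0..ord g - 1}" by auto
    hence "B * i = B * j" using inj0 h(3) unfolding inj_on_def by blast
    thus "i = j" using B3 by simp
  qed
  have injT: "inj_on (\<lambda>j. g [^] (A * j)) {1..q}"
  proof (rule inj_onI)
    fix i j assume h: "i \<in> {1..q}" "j \<in> {1..q}" "g [^] (A * i) = g [^] (A * j)"
    have "A * i \<le> A * (B - 1)" "A * j \<le> A * (B - 1)" using h qB by auto
    moreover have "A * (B - 1) \<le> ord g - 1" using og A3 B3 by (simp add: algebra_simps)
    ultimately have "A * i \<le> ord g - 1" "A * j \<le> ord g - 1" by linarith+
    hence "A * i \<in> {0..ord g - 1}" "A * j \<in> {0..ord g - 1}" by auto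
    hence "A * i = A * j" using inj0 h(3) unfolding inj_on_def by blast
    thus "i = j" using A3 by simp
  qed
  have cS: "card S0 = s" unfolding S0_def s_def using card_image[OF injS] by simp
  have cT: "card T0 = q" unfolding T0_def using card_image[OF injT] by simp
  have Sprop: "\<And>x. x \<in> S0 \<Longrightarrow> x \<in> carrier G \<and> x [^] A = \<one> \<and> x \<noteq> \<one>"
  proof -
    fix x assume "x \<in> S0"
    then obtain j where j: "j \<in> {1..<A}" "x = g [^] (B * j)" unfolding S0_def by auto
    have "x [^] A = g [^] (B * j * A)" using j g by (simp add: nat_pow_pow)
    also have "\<dots> = \<one>" using pow_eq_id[OF g] og by (simp add: algebra_simps)
    finally have xa: "x [^] A = \<one>" .
    have "x \<noteq> \<one>"
    proof
      assume "x = \<one>"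
      hence "A * B dvd B * j" using pow_eq_id[OF g] og j by simp
      hence "A dvd j" using B3 by (simp add: mult.commute)
      thus False using j by (auto dest: dvd_imp_le)
    qed
    thus "x \<in> carrier G \<and> x [^] A = \<one> \<and> x \<noteq> \<one>" using xa j g by simp
  qed
  have Tprop: "\<And>y. y \<in> T0 \<Longrightarrow> y \<in> carrier G \<and> y [^] B = \<one> \<and> y \<noteq> \<one>"
  proof -
    fix y assume "y \<in> T0"
    then obtain j where j: "j \<in> {1..q}" "y = g [^] (A * j)" unfolding T0_def by auto
    have "y [^] B = g [^] (A * j * B)" using j g by (simp add: nat_pow_pow)
    also have "\<dots> = \<one>" using pow_eq_id[OF g] og by (simp add: algebra_simps)
    finally have yb: "y [^] B = \<one>" .
    have "y \<noteq> \<one>"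
    proof
      assume "y = \<one>"
      hence "A * B dvd A * j" using pow_eq_id[OF g] og j by simp
      hence "B dvd j" using A3 by simp
      thus False using j qB by (auto dest: dvd_imp_le)
    qed
    thus "y \<in> carrier G \<and> y [^] B = \<one> \<and> y \<noteq> \<one>" using yb j g by simp
  qed
  have disj: "S0 \<inter> T0 = {}"
  proof (rule ccontr)
    assume "S0 \<inter> T0 \<noteq> {}"
    then obtain z where "z \<in> S0" "z \<in> T0" by blast
    thus False using Sprop Tprop both_pow_one[OF _ _ _ cop] by blast
  qed
  have nadj: "\<forall>x\<in>S0. \<forall>y\<in>T0. \<not> power_adj G x y"
    using Sprop Tprop coprime_nonadj[OF _ _ _ _ cop] by blast
  have "S0 \<subseteq> carrier G" "T0 \<subseteq> carrier G" using Sprop Tprop by auto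
  moreover have "s \<le> k" using ar unfolding s_def by simp
  ultimately show ?thesis using disj cS cT s1 cq(1,2) nadj by blast
qed

lemma nonprimepower_split:
  fixes n :: nat
  assumes odd: "odd n" and n3: "n \<ge> 3" and npp: "\<not> (\<exists>p a. prime p \<and> a \<ge> 1 \<and> n = p ^ a)"
  shows "\<exists>A B. n = A * B \<and> coprime A B \<and> A \<ge> 3 \<and> B \<ge> 3"
proof -
  obtain p where p: "prime p" "p dvd n" using prime_factor_nat[of n] n3 by auto
  define e where "e = multiplicity p n"
  have n0: "n \<noteq> 0" using n3 by simp
  have pu: "\<not> is_unit p" using p(1) by (metis not_prime_unit)
  obtain y where y: "n = p ^ e * y" "\<not> p dvd y" unfolding e_def
    using multiplicity_decompose'[of n p] n0 pu by metis
  have "multiplicity p n > 0" using multiplicity_gt_zero_iff[of n p] n0 pu p(2) by blast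
  hence e1: "e \<ge> 1" unfolding e_def by simp
  have cop: "coprime (p ^ e) y" using p y(2) by (simp add: prime_imp_coprime coprime_power_left_iff)
  have "y \<noteq> 1"
  proof
    assume "y = 1"
    hence "n = p ^ e" using y(1) by simp
    thus False using npp p(1) e1 by blast
  qed
  moreover have "y \<noteq> 0" using y(1) n0 by (metis mult_0_right)
  moreover have "odd y" using odd y(1) by simp
  ultimately have y3: "y \<ge> 3" by presburger
  have "odd (p ^ e)" using odd y(1) by simp
  moreover have "p ^ e \<ge> p"
  proof -
    have "p ^ 1 \<le> p ^ e" using e1 prime_gt_0_nat[OF p(1)] by (intro power_increasing) auto
    thus ?thesis by simp
  qed
  moreover have "p \<ge> 2" using p by (simp add: prime_ge_2_nat)
  ultimately have "p ^ e \<ge> 3" by presburger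
  thus ?thesis using y(1) cop y3 by blast
qed
theorem mainTheorem2:
  fixes G :: "('a, 'b) monoid_scheme"
  assumes "group G" and "finite (carrier G)"
  shows "is_class2 (carrier G) (power_adj G) \<longleftrightarrow>
         (cyclic_group G \<and>
          (\<exists>(p::nat) (a::nat). prime p \<and> odd p \<and> a \<ge> 1 \<and> order G = p ^ a))"
proof -
  interpret group G by fact
  note fin = assms(2)
  define V where "V = carrier G"
  define E where "E = power_adj G"
  have finV: "finite V" unfolding V_def by (rule fin)
  have sym: "\<And>x y. x \<in> V \<Longrightarrow> y \<in> V \<Longrightarrow> E x y \<Longrightarrow> E y x" unfolding E_def by (rule power_adj_sym)
  have irr: "\<And>x. x \<in> V \<Longrightarrow> \<not> E x x" unfolding E_def by (rule power_adj_irr)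
  have oneV: "\<one>\<^bsub>G\<^esub> \<in> V" unfolding V_def by simp
  have univ: "\<And>u. u \<in> V \<Longrightarrow> u \<noteq> \<one>\<^bsub>G\<^esub> \<Longrightarrow> E \<one>\<^bsub>G\<^esub> u" unfolding E_def V_def by (rule power_adj_one)
  have cardV: "card V = order G" unfolding V_def order_def by simp
  have notc2: "\<And>c. proper_edge_colouring V E (card V - 1) c \<Longrightarrow> \<not> is_class2 V E"
    by (rule not_class2_if_colouring[of V E "\<one>\<^bsub>G\<^esub>", OF finV irr oneV univ])
  have npos: "order G \<ge> 1" using finV oneV cardV by (metis card_0_eq empty_iff less_one not_le)
  have "is_class2 V E \<longleftrightarrow> (cyclic_group G \<and> (\<exists>(p::nat) (a::nat). prime p \<and> odd p \<and> a \<ge> 1 \<and> order G = p ^ a))"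
  proof
    assume c2: "is_class2 V E"
    show "cyclic_group G \<and> (\<exists>(p::nat) (a::nat). prime p \<and> odd p \<and> a \<ge> 1 \<and> order G = p ^ a)"
    proof (rule ccontr)
      assume nR: "\<not> (cyclic_group G \<and> (\<exists>(p::nat) (a::nat). prime p \<and> odd p \<and> a \<ge> 1 \<and> order G = p ^ a))"
      have "\<exists>c. proper_edge_colouring V E (card V - 1) c"
      proof (cases "order G = 1")
        case True
        have "graph_edges V E = {}"
        proof -
          have "\<And>u v. u \<in> V \<Longrightarrow> v \<in> V \<Longrightarrow> u = v" using True cardV by (metis card_1_singletonE singletonD)
          thus ?thesis unfolding graph_edges_def using irr by blast
        qed
        thus ?thesis unfolding proper_edge_colouring_def by simp
      next
        case n1: False
        show ?thesis
        proof (cases "even (order G)")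
          case True
          have "card V \<ge> 2" using True n1 npos cardV by presburger
          from even_colouring[of V E, OF finV _ this sym irr] True cardV show ?thesis by simp
        next
          case oddn: False
          define k where "k = order G div 2"
          have nk: "order G = 2*k+1" unfolding k_def using oddn by presburger
          have k1: "k \<ge> 1" using nk n1 by simp
          have cV: "card V = 2*k+1" using nk cardV by simp
          have "\<exists>c. proper_edge_colouring V E (2*k) c"
          proof (cases "cyclic_group G")
            case False
            obtain g Y where g: "g \<in> carrier G" and Y: "Y \<subseteq> carrier G" "g \<notin> Y" "order G \<le> 2 * card Y"
              and nadj: "\<forall>y\<in>Y. \<not> power_adj G g y"
              using noncyclic_star[OF fin False] by blast
            have "k \<le> card Y" using Y(3) nk by simp
            then obtain T0 where T0: "T0 \<subseteq> Y" "card T0 = k" by (rule obtain_subset_with_card_n)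
            show ?thesis
            proof (rule bipartite_nonadj_colouring[of V k E "{g}" T0 1 k, OF finV cV k1 sym irr])
              show "{g} \<subseteq> V" using g unfolding V_def by simp
              show "T0 \<subseteq> V" using T0 Y unfolding V_def by auto
              show "{g} \<inter> T0 = {}" using T0 Y by auto
              show "\<And>x y. x \<in> {g} \<Longrightarrow> y \<in> T0 \<Longrightarrow> \<not> E x y" using nadj T0 unfolding E_def by auto
            qed (use T0 k1 in auto)
          next
            case True
            have npp: "\<not> (\<exists>p a. prime p \<and> a \<ge> 1 \<and> order G = p ^ a)"
            proof
              assume "\<exists>p a. prime p \<and> a \<ge> 1 \<and> order G = p ^ a"
              then obtain p a where pa: "prime p" "a \<ge> 1" "order G = p ^ a" by blast
              have "odd (p ^ a)" using pa(3) oddn by simp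
              hence "odd p" using pa(2) by simp
              thus False using nR True pa by blast
            qed
            have n3: "order G \<ge> 3" using nk k1 by simp
            obtain A B where AB: "order G = A * B" "coprime A B" "A \<ge> 3" "B \<ge> 3"
              using nonprimepower_split[OF oddn n3 npp] by blast
            obtain S0 T0 s q where st: "S0 \<subseteq> carrier G" "T0 \<subseteq> carrier G" "S0 \<inter> T0 = {}"
              "card S0 = s" "card T0 = q" "s \<ge> 1" "s \<le> k" "(q - 1) * s < k" "k \<le> q * s"
              "\<forall>x\<in>S0. \<forall>y\<in>T0. \<not> power_adj G x y"
              using cyclic_nonpp_sets[OF fin True AB nk] by blast
            show ?thesis
              by (rule bipartite_nonadj_colouring[of V k E S0 T0 s q, OF finV cV k1 sym irr])
                 (use st in \<open>auto simp: V_def E_def\<close>)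
          qed
          thus ?thesis using cV by simp
        qed
      qed
      thus False using notc2 c2 by blast
    qed
  next
    assume R: "cyclic_group G \<and> (\<exists>(p::nat) (a::nat). prime p \<and> odd p \<and> a \<ge> 1 \<and> order G = p ^ a)"
    then obtain p a where pa: "prime p" "odd p" "a \<ge> 1" "order G = p ^ a" and cyc: "cyclic_group G" by blast
    have comp: "\<And>u v. u \<in> V \<Longrightarrow> v \<in> V \<Longrightarrow> E u v \<longleftrightarrow> u \<noteq> v"
      using cyclic_prime_power_complete[OF fin cyc pa(1) pa(4)] irr unfolding V_def E_def by blast
    have oddV: "odd (card V)" using pa cardV by simp
    have "p \<ge> 3" using pa(1,2) prime_ge_2_nat[OF pa(1)] by presburger
    moreover have "p ^ 1 \<le> p ^ a" using pa(3) prime_gt_0_nat[OF pa(1)] by (intro power_increasing) auto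
    ultimately have "card V \<ge> 3" using pa(4) cardV by simp
    from complete_class2[OF finV oddV this comp] show "is_class2 V E" .
  qed
  thus ?thesis unfolding V_def E_def .
qed

end
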